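(* Let $(X,d)$ and $(Y,D)$ be metric spaces, $x\in X$, $y\in Y$. Suppose $\varepsilon\in(0,1]\mapsto\rho^x_\varepsilon$ is a zoom sequence at $x$ with values in $(Y,D)$ and base point $y$, with zoom modulus $F$, and suppose that for a given $\mu\in(0,1)$ this zoom sequence is scale stable at scale $\mu$, with limit relation $\bar\rho^x_\mu\subset\bar B(y,\mu)\times\bar B(y,1)$ and scale stability modulus $F_\mu$. Then for any $(u',u''),(v',v'')\in\bar\rho^x_\mu$ we have $$D(u'',v'')=\frac{1}{\mu}D(u',v').$$ In particular $\bar\rho^x_\mu$ is the graph of a function (its precision and resolution are equal to $0$).
   Context: For a relation $\rho\subset X\times Y$ between metric spaces $(X,d_X)$, $(Y,d_Y)$, its accuracy is $acc(\rho)=\sup\{|d_Y(y_1,y_2)-d_X(x_1,x_2)|:(x_1,y_1),(x_2,y_2)\in\rho\}$; $\mathrm{dom}\,\rho$ and $\mathrm{im}\,\rho$ denote the projections of $\rho$ to $X$ and $Y$. A zoom sequence at $x$ is a family $\varepsilon\in(0,1]\mapsto\rho^x_\varepsilon\subset\bar B(x,\varepsilon)\times Y$ with $\mathrm{dom}\,\rho^x_\varepsilon=\bar B(x,\varepsilon)$, $\mathrm{im}\,\rho^x_\varepsilon=Y$, $(x,y)\in\rho^x_\varepsilon$ for all $\varepsilon$, together with a zoom modulus $F:(0,1)\to[0,+\infty)$ with $\lim_{\varepsilon\to0}F(\varepsilon)=0$ such that $acc(\rho^x_\varepsilon)\le F(\varepsilon)$ for all $\varepsilon\in(0,1)$, where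 the accuracy is computed with the distance $\frac1\varepsilon d$ on $\bar B(x,\varepsilon)$ and $D$ on $Y$, i.e. $\sup\{|D(y_1,y_2)-\frac1\varepsilon d(x_1,x_2)|:(x_1,y_1),(x_2,y_2)\in\rho^x_\varepsilon\}\le F(\varepsilon)$. For $\mu\in(0,1)$ define $\rho^x_{\varepsilon,\mu}=\{(u',u'')\in\bar B(y,\mu)\times\bar B(y,1):\exists u\in\bar B(x,\varepsilon\mu),\ (u,u')\in\rho^x_\varepsilon,\ (u,u'')\in\rho^x_{\varepsilon\mu}\}$. The zoom sequence is scale stable at scale $\mu$ if there is a relation $\bar\rho^x_\mu\subset\bar B(y,\mu)\times\bar B(y,1)$ and a function $F_\mu$ with $F_\mu(\varepsilon)\to0$ as $\varepsilon\to0$ such that the Hausdorff distance between $\rho^x_{\varepsilon,\mu}$ and $\bar\rho^x_\mu$, in $\bar B(y,\mu)\times\bar B(y,1)$ with the distance $D_\mu((u',u''),(v',v''))=\frac1\mu D(u',v')+D(u'',v'')$, is at most $F_\mu(\varepsilon)$; $F_\mu$ is called a scale stability modulus. *)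

theory Defs
  imports "HOL-Analysis.Analysis"
begin

text \<open>Accuracy of a relation between two spaces with distances dX, dY
  (supremum taken in the extended reals; the sup of the empty set is -infinity).\<close>
definition acc :: "('a \<Rightarrow> 'a \<Rightarrow> real) \<Rightarrow> ('b \<Rightarrow> 'b \<Rightarrow> real) \<Rightarrow> ('a \<times> 'b) set \<Rightarrow> ereal" where
  "acc dX dY \<rho> = (SUP pq \<in> \<rho> \<times> \<rho>.
      ereal \<bar>dY (snd (fst pq)) (snd (snd pq)) - dX (fst (fst pq)) (fst (snd pq))\<bar>)"

text \<open>Hausdorff distance between two subsets for a given distance function
  (in the extended reals; it is +infinity if exactly one of the sets is empty).\<close>
definition hausdorff_dist :: "('a \<Rightarrow> 'a \<Rightarrow> real) \<Rightarrow> 'a set \<Rightarrow> 'a set \<Rightarrow> ereal" where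
  "hausdorff_dist d A B = max (SUP a\<in>A. INF b\<in>B. ereal (d a b)) (SUP b\<in>B. INF a\<in>A. ereal (d a b))"

definition zoom_sequence ::
  "'a::metric_space \<Rightarrow> 'b::metric_space \<Rightarrow> (real \<Rightarrow> ('a \<times> 'b) set) \<Rightarrow> (real \<Rightarrow> real) \<Rightarrow> bool" where
  "zoom_sequence x y \<rho> F \<longleftrightarrow>
     (\<forall>\<epsilon>\<in>{0<..1}. \<rho> \<epsilon> \<subseteq> cball x \<epsilon> \<times> UNIV \<and> fst ` \<rho> \<epsilon> = cball x \<epsilon> \<and>
                    snd ` \<rho> \<epsilon> = UNIV \<and> (x, y) \<in> \<rho> \<epsilon>) \<and>
     (\<forall>\<epsilon>\<in>{0<..<1}. F \<epsilon> \<ge> 0) \<and> (F \<longlongrightarrow> 0) (at_right 0) \<and>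
     (\<forall>\<epsilon>\<in>{0<..<1}. acc (\<lambda>a b. dist a b / \<epsilon>) dist (\<rho> \<epsilon>) \<le> ereal (F \<epsilon>))"

definition rho_eps_mu ::
  "'a::metric_space \<Rightarrow> 'b::metric_space \<Rightarrow> (real \<Rightarrow> ('a \<times> 'b) set) \<Rightarrow> real \<Rightarrow> real \<Rightarrow> ('b \<times> 'b) set" where
  "rho_eps_mu x y \<rho> \<epsilon> \<mu> = {(u', u''). u' \<in> cball y \<mu> \<and> u'' \<in> cball y 1 \<and>
      (\<exists>u \<in> cball x (\<epsilon> * \<mu>). (u, u') \<in> \<rho> \<epsilon> \<and> (u, u'') \<in> \<rho> (\<epsilon> * \<mu>))}"

definition D_mu :: "real \<Rightarrow> ('b::metric_space \<times> 'b) \<Rightarrow> ('b \<times> 'b) \<Rightarrow> real" where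
  "D_mu \<mu> p q = dist (fst p) (fst q) / \<mu> + dist (snd p) (snd q)"

definition scale_stable ::
  "'a::metric_space \<Rightarrow> 'b::metric_space \<Rightarrow> (real \<Rightarrow> ('a \<times> 'b) set) \<Rightarrow> real \<Rightarrow> ('b \<times> 'b) set \<Rightarrow> (real \<Rightarrow> real) \<Rightarrow> bool" where
  "scale_stable x y \<rho> \<mu> \<rho>bar F\<mu> \<longleftrightarrow>
     \<rho>bar \<subseteq> cball y \<mu> \<times> cball y 1 \<and> (F\<mu> \<longlongrightarrow> 0) (at_right 0) \<and>
     (\<forall>\<epsilon>\<in>{0<..<1}. hausdorff_dist (D_mu \<mu>) (rho_eps_mu x y \<rho> \<epsilon> \<mu>) \<rho>bar \<le> ereal (F\<mu> \<epsilon>))"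

end

theory Submission
  imports Defs
begin

lemma acc_bound:
  assumes "acc dX dY \<rho> \<le> ereal c" "(a,b) \<in> \<rho>" "(a',b') \<in> \<rho>"
  shows "\<bar>dY b b' - dX a a'\<bar> \<le> c"
proof -
  have "ereal \<bar>dY b b' - dX a a'\<bar> \<le> acc dX dY \<rho>"
    unfolding acc_def using assms(2,3)
    by (intro SUP_upper2[of "((a,b),(a',b'))"]) auto
  then have "ereal \<bar>dY b b' - dX a a'\<bar> \<le> ereal c" using assms(1) by (rule order_trans)
  then show ?thesis by simp
qed

lemma haus_close:
  assumes "hausdorff_dist d A B \<le> ereal r" "p \<in> B" "\<delta> > 0"
  shows "\<exists>a\<in>A. d a p < r + \<delta>"
proof -
  have "(INF a\<in>A. ereal (d a p)) \<le> (SUP b\<in>B. INF a\<in>A. ereal (d a b))"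
    using assms(2) by (rule SUP_upper2) simp
  also have "\<dots> \<le> ereal r" using assms(1) unfolding hausdorff_dist_def by simp
  also have "\<dots> < ereal (r + \<delta>)" using assms(3) by simp
  finally have "(INF a\<in>A. ereal (d a p)) < ereal (r + \<delta>)" .
  then obtain a where "a \<in> A" "ereal (d a p) < ereal (r+\<delta>)" by (auto simp: INF_less_iff)
  then show ?thesis by auto
qed

lemma rho_em_dist:
  assumes Z: "zoom_sequence x y \<rho> F" and mu: "\<mu> \<in> {0<..<1}" and e: "\<epsilon> \<in> {0<..<1}"
    and a: "(a', a'') \<in> rho_eps_mu x y \<rho> \<epsilon> \<mu>" and b: "(b', b'') \<in> rho_eps_mu x y \<rho> \<epsilon> \<mu>"
  shows "\<bar>dist a'' b'' - dist a' b' / \<mu>\<bar> \<le> F (\<epsilon> * \<mu>) + F \<epsilon> / \<mu>"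
proof -
  obtain u where u: "(u,a') \<in> \<rho> \<epsilon>" "(u,a'') \<in> \<rho> (\<epsilon>*\<mu>)"
    using a unfolding rho_eps_mu_def by auto
  obtain w where w: "(w,b') \<in> \<rho> \<epsilon>" "(w,b'') \<in> \<rho> (\<epsilon>*\<mu>)"
    using b unfolding rho_eps_mu_def by auto
  have em: "\<epsilon>*\<mu> \<in> {0<..<1}" using mu e proof -
    have "\<epsilon>*\<mu> < 1*1" using mu e by (intro mult_strict_mono) auto
    then show ?thesis using mu e by auto
  qed
  have A1: "acc (\<lambda>a b. dist a b / \<epsilon>) dist (\<rho> \<epsilon>) \<le> ereal (F \<epsilon>)" using Z e unfolding zoom_sequence_def by auto
  have A2: "acc (\<lambda>a b. dist a b / (\<epsilon>*\<mu>)) dist (\<rho> (\<epsilon>*\<mu>)) \<le> ereal (F (\<epsilon>*\<mu>))" using Z em unfolding zoom_sequence_def by blast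
  have 1: "\<bar>dist a' b' - dist u w / \<epsilon>\<bar> \<le> F \<epsilon>" using acc_bound[OF A1 u(1) w(1)] by simp
  have 2: "\<bar>dist a'' b'' - dist u w / (\<epsilon>*\<mu>)\<bar> \<le> F (\<epsilon>*\<mu>)" using acc_bound[OF A2 u(2) w(2)] by simp
  have "\<bar>dist a' b' / \<mu> - dist u w / (\<epsilon>*\<mu>)\<bar> = \<bar>dist a' b' - dist u w / \<epsilon>\<bar> / \<mu>"
    using mu by (simp add: field_simps abs_div_pos flip: abs_divide)
  also have "\<dots> \<le> F \<epsilon> / \<mu>" using 1 mu by (simp add: divide_right_mono)
  finally show ?thesis using 2 by linarith
qed

lemma dd: "\<bar>dist (u::'a::metric_space) v - dist a b\<bar> \<le> dist a u + dist b v"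
proof -
  have "dist u v \<le> dist u a + dist a v" by (rule dist_triangle)
  moreover have "dist a v \<le> dist a b + dist b v" by (rule dist_triangle)
  moreover have "dist a b \<le> dist a u + dist u b" by (rule dist_triangle)
  moreover have "dist u b \<le> dist u v + dist v b" by (rule dist_triangle)
  moreover have "dist u a = dist a u" "dist v b = dist b v" by (simp_all add: dist_commute)
  ultimately show ?thesis by (simp only: abs_le_iff) linarith
qed

theorem proposition4p3:
  fixes x :: "'a::metric_space" and y :: "'b::metric_space"
    and \<rho> :: "real \<Rightarrow> ('a \<times> 'b) set" and F F\<mu> :: "real \<Rightarrow> real"
    and \<mu> :: real and \<rho>bar :: "('b \<times> 'b) set"
  assumes "zoom_sequence x y \<rho> F"
    and "\<mu> \<in> {0<..<1}"
    and "scale_stable x y \<rho> \<mu> \<rho>bar F\<mu>"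
  shows "\<forall>(u', u'') \<in> \<rho>bar. \<forall>(v', v'') \<in> \<rho>bar. dist u'' v'' = dist u' v' / \<mu>"
proof (intro ballI, clarify)
  fix u' u'' v' v'' assume U: "(u',u'') \<in> \<rho>bar" and V: "(v',v'') \<in> \<rho>bar"
  have mu: "0 < \<mu>" "\<mu> < 1" using assms(2) by auto
  have FT: "(F \<longlongrightarrow> 0) (at_right 0)" using assms(1) unfolding zoom_sequence_def by blast
  have FmT: "(F\<mu> \<longlongrightarrow> 0) (at_right 0)" using assms(3) unfolding scale_stable_def by blast
  have "\<bar>dist u'' v'' - dist u' v' / \<mu>\<bar> \<le> e" if e: "e > 0" for e
  proof -
    define c where "c = min (\<mu>*e/8) (e/8)"
    have c: "c > 0" using e mu by (simp add: c_def)
    obtain b1 where b1: "b1 > 0" "\<And>t. 0 < t \<Longrightarrow> t < b1 \<Longrightarrow> dist (F t) 0 < c"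
      using FT c unfolding tendsto_iff eventually_at_right_field by force
    obtain b2 where b2: "b2 > 0" "\<And>t. 0 < t \<Longrightarrow> t < b2 \<Longrightarrow> dist (F\<mu> t) 0 < e/8"
      using FmT e unfolding tendsto_iff eventually_at_right_field
      by (metis divide_pos_pos zero_less_numeral)
    define \<epsilon> where "\<epsilon> = min b1 (min b2 1) / 2"
    have ep: "0 < \<epsilon>" "\<epsilon> < b1" "\<epsilon> < b2" "\<epsilon> < 1" using b1 b2 by (auto simp: \<epsilon>_def)
    have epm: "0 < \<epsilon>*\<mu>" "\<epsilon>*\<mu> < b1" using ep mu
    proof -
      have "\<epsilon>*\<mu> < \<epsilon>*1" using ep mu by (intro mult_strict_left_mono) auto
      then have h: "\<epsilon>*\<mu> < \<epsilon>" by simp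
      show "0 < \<epsilon>*\<mu>" using ep mu by simp
      show "\<epsilon>*\<mu> < b1" using h ep by linarith
    qed
    have F1: "F \<epsilon> < \<mu>*e/8" using b1(2)[OF ep(1,2)] by (simp add: c_def) linarith
    have F2: "F (\<epsilon>*\<mu>) < e/8" using b1(2)[OF epm] by (simp add: c_def) linarith
    have F3: "F\<mu> \<epsilon> < e/8" using b2(2)[OF ep(1,3)] by simp
    have H: "hausdorff_dist (D_mu \<mu>) (rho_eps_mu x y \<rho> \<epsilon> \<mu>) \<rho>bar \<le> ereal (F\<mu> \<epsilon>)"
      using assms(3) ep unfolding scale_stable_def by auto
    have d: "e/8 > 0" using e by simp
    obtain a where a: "a \<in> rho_eps_mu x y \<rho> \<epsilon> \<mu>" "D_mu \<mu> a (u',u'') < F\<mu> \<epsilon> + e/8"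
      using haus_close[OF H U d] by blast
    obtain b where b: "b \<in> rho_eps_mu x y \<rho> \<epsilon> \<mu>" "D_mu \<mu> b (v',v'') < F\<mu> \<epsilon> + e/8"
      using haus_close[OF H V d] by blast
    obtain a' a'' where [simp]: "a = (a',a'')" by (cases a)
    obtain b' b'' where [simp]: "b = (b',b'')" by (cases b)
    have R: "\<bar>dist a'' b'' - dist a' b' / \<mu>\<bar> \<le> F (\<epsilon> * \<mu>) + F \<epsilon> / \<mu>"
    proof -
      have "\<epsilon> \<in> {0<..<1}" using ep by simp
      from rho_em_dist[OF assms(1,2) this] a(1) b(1) show ?thesis by simp
    qed
    have Fe: "F \<epsilon> / \<mu> < e/8" using F1 mu by (simp add: divide_less_eq mult.commute)
    have Da: "dist a' u' / \<mu> + dist a'' u'' < e/4" using a(2) F3 by (simp add: D_mu_def)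
    have Db: "dist b' v' / \<mu> + dist b'' v'' < e/4" using b(2) F3 by (simp add: D_mu_def)
    have t1: "\<bar>dist u'' v'' - dist a'' b''\<bar> \<le> dist a'' u'' + dist b'' v''"
      by (rule dd)
    have t2: "\<bar>dist u' v' - dist a' b'\<bar> \<le> dist a' u' + dist b' v'"
      by (rule dd)
    have t2': "\<bar>dist u' v' / \<mu> - dist a' b' / \<mu>\<bar> \<le> dist a' u' / \<mu> + dist b' v' / \<mu>"
    proof -
      have "\<bar>dist u' v' / \<mu> - dist a' b' / \<mu>\<bar> = \<bar>dist u' v' - dist a' b'\<bar> / \<mu>"
        using mu by (metis abs_divide abs_of_pos diff_divide_distrib)
      also have "\<dots> \<le> (dist a' u' + dist b' v') / \<mu>" using divide_right_mono[OF t2, of \<mu>] mu by linarith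
      finally show ?thesis by (simp add: add_divide_distrib)
    qed
    have tri: "\<bar>dist u'' v'' - dist u' v' / \<mu>\<bar> \<le> \<bar>dist u'' v'' - dist a'' b''\<bar>
       + \<bar>dist a'' b'' - dist a' b' / \<mu>\<bar> + \<bar>dist u' v' / \<mu> - dist a' b' / \<mu>\<bar>"
      by (simp only: abs_le_iff) linarith
    have "dist a'' u'' + dist b'' v'' + (dist a' u' / \<mu> + dist b' v' / \<mu>) < e/2"
      using Da Db by linarith
    from tri t1 t2' R Fe F2 this show ?thesis by linarith
  qed
  note E = this
  have "\<bar>dist u'' v'' - dist u' v' / \<mu>\<bar> = 0"
  proof (rule ccontr)
    assume "\<bar>dist u'' v'' - dist u' v' / \<mu>\<bar> \<noteq> 0"
    then have p: "\<bar>dist u'' v'' - dist u' v' / \<mu>\<bar> > 0" by simp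
    have "\<bar>dist u'' v'' - dist u' v' / \<mu>\<bar> \<le> \<bar>dist u'' v'' - dist u' v' / \<mu>\<bar> / 2"
      using p by (intro E) simp
    with p show False by simp
  qed
  then show "dist u'' v'' = dist u' v' / \<mu>" by simp
qed

end
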